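(* Let $H$ be a finitely generated residually finite group and let $(Y,H)$ be a free $H$-odometer. Suppose a free dynamical system $(X,G)$, with $X$ a Cantor set and $G$ a countable group, is continuously orbit equivalent to $(Y,H)$. Then $(X,G)$ is topologically conjugate to a free $G$-odometer which is structurally conjugate to $(Y,H)$. In particular $G$ and $H$ have isomorphic subgroups of the same finite index.
   Context: Free: $g\cdot x=x$ implies $g=e$. $G$-odometer: for a decreasing sequence $G_0\supseteq G_1\supseteq\cdots$ of finite-index subgroups of $G$ (not necessarily normal), the inverse limit $\varprojlim(G/G_n,\pi_n)$ of left coset spaces under the natural maps $\pi_n:G/G_n\to G/G_{n-1}$, with $G$ acting by left multiplication coordinatewise; we say $\{G_n\}$ determines a system if the system is conjugate to this odometer. Continuous orbit equivalence of $(X,G)$ and $(Y,H)$: a homeomorphism $\psi:X\to Y$ with $\psi(G\cdot x)=H\cdot\psi(x)$ for all $x$, such that for every $x\in X$, $g\in G$ there are $h\in H$ and a clopen neighborhood $U$ of $x$ with $\psi(g\cdot z)=h\cdot\psi(z)$ for $z\in U$, and symmetrically for $\psi^{-1}$. Structural conjugacy of odometers $(X,G)$ and $(Y,H)$: there exist decreasing sequences of finite-index subgroups $\{G_n\}_{n\ge0}$ of $G$ and $\{H_n\}_{n\ge0}$ of $H$ determining $(X,G)$ and $(Y,H)$ respectively, and a group isomorphism $\theta:H_0\to G_0$ with $\theta(H_n)=G_n$ for all $n\ge0$ and $[G:G_0]=[H:H_0]<\infty$. *)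

theory Defs
  imports "HOL-Analysis.Analysis" "HOL-Algebra.Algebra"
begin

definition group_action_top :: "('g,'b) monoid_scheme \<Rightarrow> 'x topology \<Rightarrow> ('g \<Rightarrow> 'x \<Rightarrow> 'x) \<Rightarrow> bool" where
  "group_action_top G T a \<longleftrightarrow> group G
     \<and> (\<forall>g\<in>carrier G. continuous_map T T (a g))
     \<and> (\<forall>x\<in>topspace T. a \<one>\<^bsub>G\<^esub> x = x)
     \<and> (\<forall>g\<in>carrier G. \<forall>h\<in>carrier G. \<forall>x\<in>topspace T. a (g \<otimes>\<^bsub>G\<^esub> h) x = a g (a h x))"

definition free_action :: "('g,'b) monoid_scheme \<Rightarrow> 'x topology \<Rightarrow> ('g \<Rightarrow> 'x \<Rightarrow> 'x) \<Rightarrow> bool" where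
  "free_action G T a \<longleftrightarrow> (\<forall>g\<in>carrier G. \<forall>x\<in>topspace T. a g x = x \<longrightarrow> g = \<one>\<^bsub>G\<^esub>)"

definition orbit_of :: "('g,'b) monoid_scheme \<Rightarrow> ('g \<Rightarrow> 'x \<Rightarrow> 'x) \<Rightarrow> 'x \<Rightarrow> 'x set" where
  "orbit_of G a x = (\<lambda>g. a g x) ` carrier G"

definition cantor_space :: "'x topology \<Rightarrow> bool" where
  "cantor_space T \<longleftrightarrow> T homeomorphic_space product_topology (\<lambda>_::nat. discrete_topology {0::nat, 1}) UNIV"

definition top_conjugate :: "('g,'b) monoid_scheme \<Rightarrow> 'x topology \<Rightarrow> ('g \<Rightarrow> 'x \<Rightarrow> 'x)
     \<Rightarrow> 'y topology \<Rightarrow> ('g \<Rightarrow> 'y \<Rightarrow> 'y) \<Rightarrow> bool" where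
  "top_conjugate G T a T' a' \<longleftrightarrow> (\<exists>\<phi>. homeomorphic_map T T' \<phi>
       \<and> (\<forall>g\<in>carrier G. \<forall>x\<in>topspace T. \<phi> (a g x) = a' g (\<phi> x)))"

definition fi_chain :: "('g,'b) monoid_scheme \<Rightarrow> (nat \<Rightarrow> 'g set) \<Rightarrow> bool" where
  "fi_chain G Gs \<longleftrightarrow> (\<forall>n. subgroup (Gs n) G \<and> finite (lcosets\<^bsub>G\<^esub> (Gs n)) \<and> Gs (Suc n) \<subseteq> Gs n)"

text \<open>The odometer: inverse limit of the left coset spaces G/G_n (discrete) under the natural
  maps gG_{n+1} \<mapsto> gG_n (i.e. compatible sequences x_{n+1} \<subseteq> x_n), as a subspace of the product.\<close>
definition odo_space :: "('g,'b) monoid_scheme \<Rightarrow> (nat \<Rightarrow> 'g set) \<Rightarrow> (nat \<Rightarrow> 'g set) topology" where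
  "odo_space G Gs = subtopology (product_topology (\<lambda>n. discrete_topology (lcosets\<^bsub>G\<^esub> (Gs n))) UNIV)
                      {x. \<forall>n. x (Suc n) \<subseteq> x n}"

definition odo_act :: "('g,'b) monoid_scheme \<Rightarrow> 'g \<Rightarrow> (nat \<Rightarrow> 'g set) \<Rightarrow> (nat \<Rightarrow> 'g set)" where
  "odo_act G g x = (\<lambda>n. g <#\<^bsub>G\<^esub> x n)"

definition determines :: "('g,'b) monoid_scheme \<Rightarrow> (nat \<Rightarrow> 'g set) \<Rightarrow> 'x topology \<Rightarrow> ('g \<Rightarrow> 'x \<Rightarrow> 'x) \<Rightarrow> bool" where
  "determines G Gs T a \<longleftrightarrow> fi_chain G Gs \<and> top_conjugate G T a (odo_space G Gs) (odo_act G)"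

definition is_odometer :: "('g,'b) monoid_scheme \<Rightarrow> 'x topology \<Rightarrow> ('g \<Rightarrow> 'x \<Rightarrow> 'x) \<Rightarrow> bool" where
  "is_odometer G T a \<longleftrightarrow> (\<exists>Gs. determines G Gs T a)"

definition struct_conjugate :: "('g,'b) monoid_scheme \<Rightarrow> 'x topology \<Rightarrow> ('g \<Rightarrow> 'x \<Rightarrow> 'x)
     \<Rightarrow> ('h,'c) monoid_scheme \<Rightarrow> 'y topology \<Rightarrow> ('h \<Rightarrow> 'y \<Rightarrow> 'y) \<Rightarrow> bool" where
  "struct_conjugate G T a H T' b \<longleftrightarrow> (\<exists>Gs Hs \<theta>. determines G Gs T a \<and> determines H Hs T' b
      \<and> \<theta> \<in> iso (H\<lparr>carrier := Hs 0\<rparr>) (G\<lparr>carrier := Gs 0\<rparr>)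
      \<and> (\<forall>n. \<theta> ` Hs n = Gs n)
      \<and> finite (lcosets\<^bsub>G\<^esub> (Gs 0)) \<and> card (lcosets\<^bsub>G\<^esub> (Gs 0)) = card (lcosets\<^bsub>H\<^esub> (Hs 0)))"

definition cont_orbit_equiv :: "('g,'b) monoid_scheme \<Rightarrow> 'x topology \<Rightarrow> ('g \<Rightarrow> 'x \<Rightarrow> 'x)
     \<Rightarrow> ('h,'c) monoid_scheme \<Rightarrow> 'y topology \<Rightarrow> ('h \<Rightarrow> 'y \<Rightarrow> 'y) \<Rightarrow> bool" where
  "cont_orbit_equiv G T a H T' b \<longleftrightarrow> (\<exists>\<psi> \<psi>'. homeomorphic_maps T T' \<psi> \<psi>'
     \<and> (\<forall>x\<in>topspace T. \<psi> ` orbit_of G a x = orbit_of H b (\<psi> x))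
     \<and> (\<forall>x\<in>topspace T. \<forall>g\<in>carrier G. \<exists>h\<in>carrier H. \<exists>U. openin T U \<and> closedin T U \<and> x \<in> U
            \<and> (\<forall>z\<in>U. \<psi> (a g z) = b h (\<psi> z)))
     \<and> (\<forall>y\<in>topspace T'. \<forall>h\<in>carrier H. \<exists>g\<in>carrier G. \<exists>V. openin T' V \<and> closedin T' V \<and> y \<in> V
            \<and> (\<forall>w\<in>V. \<psi>' (b h w) = a g (\<psi>' w))))"

definition finitely_generated :: "('g,'b) monoid_scheme \<Rightarrow> bool" where
  "finitely_generated G \<longleftrightarrow> (\<exists>S. finite S \<and> S \<subseteq> carrier G \<and> generate G S = carrier G)"

definition residually_finite :: "('g,'b) monoid_scheme \<Rightarrow> bool" where
  "residually_finite G \<longleftrightarrow> (\<forall>g\<in>carrier G. g \<noteq> \<one>\<^bsub>G\<^esub> \<longrightarrow>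
      (\<exists>N. N \<lhd> G \<and> finite (rcosets\<^bsub>G\<^esub> N) \<and> g \<notin> N))"

end

theory Submission
  imports Defs
begin

section \<open>General facts on odometers\<close>

lemma odo_topspace:
  "topspace (odo_space G Gs) = {x. (\<forall>n. x n \<in> lcosets\<^bsub>G\<^esub> (Gs n)) \<and> (\<forall>n. x (Suc n) \<subseteq> x n)}"
  unfolding odo_space_def by (auto simp: PiE_UNIV_domain)

lemma lcos_in_lcosets: "a \<in> carrier G \<Longrightarrow> a <#\<^bsub>G\<^esub> K \<in> lcosets\<^bsub>G\<^esub> K"
  unfolding LCOSETS_def by blast

lemma lcosetsE: "C \<in> lcosets\<^bsub>G\<^esub> K \<Longrightarrow> (\<And>a. a \<in> carrier G \<Longrightarrow> C = a <#\<^bsub>G\<^esub> K \<Longrightarrow> P) \<Longrightarrow> P"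
  unfolding LCOSETS_def by blast

lemma lcos_mono: "K \<subseteq> K' \<Longrightarrow> a <#\<^bsub>G\<^esub> K \<subseteq> a <#\<^bsub>G\<^esub> K'"
  unfolding l_coset_def by blast

lemma lcosets_nonempty:
  assumes "group G" "subgroup K G" "C \<in> lcosets\<^bsub>G\<^esub> K" shows "C \<noteq> {}"
  using assms by (metis empty_iff group.lcos_self lcosetsE)

lemma lcosets_eq_of_mem:
  assumes "group G" "subgroup K G" "C \<in> lcosets\<^bsub>G\<^esub> K" "k \<in> C"
  shows "C = k <#\<^bsub>G\<^esub> K"
  using assms by (metis group.l_repr_independence lcosetsE)

lemma lcosets_eq_of_int:
  assumes "group G" "subgroup K G" "C \<in> lcosets\<^bsub>G\<^esub> K" "D \<in> lcosets\<^bsub>G\<^esub> K" "k \<in> C" "k \<in> D"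
  shows "C = D"
  using assms group.lcos_disjoint by fastforce

lemma fi_chain_mono: "fi_chain G Gs \<Longrightarrow> n \<le> m \<Longrightarrow> Gs m \<subseteq> Gs n"
  unfolding fi_chain_def by (rule lift_Suc_antimono_le) auto

lemma odo_mono: "x \<in> topspace (odo_space G Gs) \<Longrightarrow> n \<le> m \<Longrightarrow> x m \<subseteq> x n"
  unfolding odo_topspace by (rule lift_Suc_antimono_le) auto

lemma odo_eq_below:
  assumes G: "group G" and ch: "fi_chain G Gs"
    and x: "x \<in> topspace (odo_space G Gs)" and x': "x' \<in> topspace (odo_space G Gs)"
    and eq: "x m = x' m" and nm: "n \<le> m"
  shows "x n = x' n"
proof -
  have sg: "subgroup (Gs k) G" for k using ch unfolding fi_chain_def by blast
  have "x m \<noteq> {}" using lcosets_nonempty[OF G sg] x unfolding odo_topspace by blast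
  then obtain k where k: "k \<in> x m" by blast
  have "k \<in> x n" using odo_mono[OF x nm] k by blast
  moreover have "k \<in> x' n" using odo_mono[OF x' nm] k eq by blast
  ultimately show ?thesis using lcosets_eq_of_int[OF G sg] x x' unfolding odo_topspace by blast
qed

lemma odo_fill:
  assumes G: "group G" and ch: "fi_chain G Gs"
    and w': "w' \<in> topspace (odo_space G (\<lambda>n. Gs (n + N)))"
  shows "\<exists>w \<in> topspace (odo_space G Gs). \<forall>n. w (n + N) = w' n"
proof -
  have sg: "subgroup (Gs k) G" for k using ch unfolding fi_chain_def by blast
  have "w' 0 \<in> lcosets\<^bsub>G\<^esub> (Gs (0 + N))" using w' unfolding odo_topspace by blast
  then have w0: "w' 0 \<in> lcosets\<^bsub>G\<^esub> (Gs N)" by simp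
  then obtain k where k: "k \<in> w' 0" using lcosets_nonempty[OF G sg] by blast
  have kc: "k \<in> carrier G" using w0 k sg subgroup.lcosets_carrier[OF sg G] by blast
  have w0eq: "w' 0 = k <#\<^bsub>G\<^esub> Gs N" using lcosets_eq_of_mem[OF G sg w0 k] .
  define w where "w m = (if N \<le> m then w' (m - N) else k <#\<^bsub>G\<^esub> Gs m)" for m
  have "w \<in> topspace (odo_space G Gs)"
    unfolding odo_topspace
  proof (intro CollectI conjI allI)
    fix n
    show "w n \<in> lcosets\<^bsub>G\<^esub> Gs n"
    proof (cases "N \<le> n")
      case True
      then show ?thesis using w' unfolding odo_topspace w_def by simp (metis le_add_diff_inverse2)
    next
      case False
      then show ?thesis unfolding w_def using lcos_in_lcosets kc by simp
    qed
    show "w (Suc n) \<subseteq> w n"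
    proof (cases "N \<le> n")
      case True
      then show ?thesis using w' unfolding odo_topspace w_def by (simp add: Suc_diff_le)
    next
      case False
      show ?thesis
      proof (cases "Suc n = N")
        case True
        have "Gs N \<subseteq> Gs n" using fi_chain_mono[OF ch] True by simp
        then show ?thesis unfolding w_def using True w0eq lcos_mono by simp
      next
        case F2: False
        have "Gs (Suc n) \<subseteq> Gs n" using ch unfolding fi_chain_def by blast
        then show ?thesis unfolding w_def using False F2 lcos_mono by simp
      qed
    qed
  qed
  moreover have "\<forall>n. w (n + N) = w' n" unfolding w_def by simp
  ultimately show ?thesis by blast
qed

lemma odo_Hausdorff: "Hausdorff_space (odo_space G Gs)"
  unfolding odo_space_def
  by (intro Hausdorff_space_subtopology) (simp add: Hausdorff_space_product_topology)

lemma odo_proj_cont: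
  "continuous_map (odo_space G Gs) (discrete_topology (lcosets\<^bsub>G\<^esub> (Gs n))) (\<lambda>x. x n)"
  unfolding odo_space_def
  by (rule continuous_map_from_subtopology) (rule continuous_map_product_projection, simp)

lemma odo_cyl:
  assumes G: "group G" and ch: "fi_chain G Gs"
    and W: "openin (odo_space G Gs) W" and x: "x \<in> W"
  shows "\<exists>n. \<forall>x'\<in>topspace (odo_space G Gs). x' n = x n \<longrightarrow> x' \<in> W"
proof -
  let ?P = "product_topology (\<lambda>n. discrete_topology (lcosets\<^bsub>G\<^esub> (Gs n))) UNIV"
  let ?S = "{x. \<forall>n. x (Suc n) \<subseteq> x n}"
  obtain T where T: "openin ?P T" "W = T \<inter> ?S"
    using W unfolding odo_space_def openin_subtopology by blast
  have xT: "x \<in> T" using T x by blast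
  obtain U where U: "finite {i \<in> UNIV. U i \<noteq> topspace (discrete_topology (lcosets\<^bsub>G\<^esub> (Gs i)))}"
     "x \<in> Pi\<^sub>E UNIV U" "Pi\<^sub>E UNIV U \<subseteq> T"
    using T(1) xT unfolding openin_product_topology_alt by blast
  define F where "F = {i \<in> UNIV. U i \<noteq> topspace (discrete_topology (lcosets\<^bsub>G\<^esub> (Gs i)))}"
  define n where "n = Max (insert 0 F)"
  have fin: "finite F" using U(1) F_def by simp
  have iF: "i \<in> F \<Longrightarrow> i \<le> n" for i unfolding n_def using fin by simp
  show ?thesis
  proof (intro exI ballI impI)
    fix x' assume x': "x' \<in> topspace (odo_space G Gs)" and eq: "x' n = x n"
    have xs: "x \<in> topspace (odo_space G Gs)" using x W openin_subset by blast
    have "\<forall>i. x' i \<in> U i"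
    proof
      fix i show "x' i \<in> U i"
      proof (cases "i \<in> F")
        case True
        then have "x' i = x i" using odo_eq_below[OF G ch x' xs eq] iF by blast
        then show ?thesis using U(2) by (simp add: PiE_UNIV_domain Pi_iff)
      next
        case False
        then show ?thesis using x' unfolding F_def odo_topspace by auto
      qed
    qed
    then have "x' \<in> T" using U(3) by (auto simp: PiE_UNIV_domain Pi_iff)
    moreover have "x' \<in> ?S" using x' unfolding odo_topspace by blast
    ultimately show "x' \<in> W" using T(2) by blast
  qed
qed

lemma (in group) lcos_self_eq_iff:
  assumes K: "subgroup K G" and k: "k \<in> carrier G"
  shows "k <# K = K \<longleftrightarrow> k \<in> K"
proof
  assume "k <# K = K"
  then show "k \<in> K" using lcos_self[OF k K] by simp
next
  assume kK: "k \<in> K"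
  have Ks: "K \<subseteq> carrier G" by (rule subgroup.subset[OF K])
  have e1: "\<one> <# K = K" by (rule lcos_mult_one[OF Ks])
  have "k \<in> \<one> <# K" using kK e1 by simp
  then have "\<one> <# K = k <# K" by (rule l_repr_independence[OF _ one_closed K])
  then show "k <# K = K" using e1 by simp
qed

lemma (in group) lcos_eq_of_inv:
  assumes K: "subgroup K G" and a: "a \<in> carrier G" and b: "b \<in> carrier G" and m: "inv b \<otimes> a \<in> K"
  shows "a <# K = b <# K"
proof -
  have "a \<in> b <# K" by (rule subgroup.lcos_module_rev[OF K is_group b a m])
  then have "b <# K = a <# K" by (rule l_repr_independence[OF _ b K])
  then show ?thesis by simp
qed

locale coe_setting =
  fixes G :: "('g,'b) monoid_scheme" and H :: "('h,'c) monoid_scheme"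
    and TX :: "'x topology" and a :: "'g \<Rightarrow> 'x \<Rightarrow> 'x"
    and TY :: "'y topology" and b :: "'h \<Rightarrow> 'y \<Rightarrow> 'y"
    and Hs :: "nat \<Rightarrow> 'h set" and \<phi> :: "'y \<Rightarrow> nat \<Rightarrow> 'h set"
    and \<psi> :: "'y \<Rightarrow> 'x" and \<psi>' :: "'x \<Rightarrow> 'y" and S :: "'h set"
  assumes grpG: "group G" and grpH: "group H"
    and actH: "group_action_top H TY b" and freeH: "free_action H TY b"
    and actG: "group_action_top G TX a" and freeG: "free_action G TX a"
    and compX: "compact_space TX"
    and chainH: "fi_chain H Hs"
    and phi: "homeomorphic_map TY (odo_space H Hs) \<phi>"
    and phi_eq: "\<forall>h\<in>carrier H. \<forall>y\<in>topspace TY. \<phi> (b h y) = odo_act H h (\<phi> y)"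
    and psi: "homeomorphic_maps TX TY \<psi>' \<psi>"
    and orb: "\<forall>x\<in>topspace TX. \<psi>' ` orbit_of G a x = orbit_of H b (\<psi>' x)"
    and loc: "\<forall>y\<in>topspace TY. \<forall>h\<in>carrier H. \<exists>g\<in>carrier G. \<exists>V. openin TY V \<and> closedin TY V \<and> y \<in> V
            \<and> (\<forall>w\<in>V. \<psi> (b h w) = a g (\<psi> w))"
    and finS: "finite S" and SH: "S \<subseteq> carrier H" and genS: "generate H S = carrier H"
begin

lemma sgH: "subgroup (Hs n) H" using chainH unfolding fi_chain_def by blast

lemma b_top: "h \<in> carrier H \<Longrightarrow> y \<in> topspace TY \<Longrightarrow> b h y \<in> topspace TY"
  using actH unfolding group_action_top_def continuous_map_def by blast

lemma a_top: "g \<in> carrier G \<Longrightarrow> x \<in> topspace TX \<Longrightarrow> a g x \<in> topspace TX"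
  using actG unfolding group_action_top_def continuous_map_def by blast

lemma a_one: "x \<in> topspace TX \<Longrightarrow> a \<one>\<^bsub>G\<^esub> x = x"
  using actG unfolding group_action_top_def by blast

lemma a_mult: "g \<in> carrier G \<Longrightarrow> h \<in> carrier G \<Longrightarrow> x \<in> topspace TX \<Longrightarrow> a (g \<otimes>\<^bsub>G\<^esub> h) x = a g (a h x)"
  using actG unfolding group_action_top_def by blast

lemma b_one: "y \<in> topspace TY \<Longrightarrow> b \<one>\<^bsub>H\<^esub> y = y"
  using actH unfolding group_action_top_def by blast

lemma b_mult: "g \<in> carrier H \<Longrightarrow> h \<in> carrier H \<Longrightarrow> y \<in> topspace TY \<Longrightarrow> b (g \<otimes>\<^bsub>H\<^esub> h) y = b g (b h y)"
  using actH unfolding group_action_top_def by blast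

lemma psi_top: "y \<in> topspace TY \<Longrightarrow> \<psi> y \<in> topspace TX"
  and psi'_top: "x \<in> topspace TX \<Longrightarrow> \<psi>' x \<in> topspace TY"
  and psi_psi': "x \<in> topspace TX \<Longrightarrow> \<psi> (\<psi>' x) = x"
  and psi'_psi: "y \<in> topspace TY \<Longrightarrow> \<psi>' (\<psi> y) = y"
  using psi unfolding homeomorphic_maps_def continuous_map_def by blast+

lemma phi_top: "y \<in> topspace TY \<Longrightarrow> \<phi> y \<in> topspace (odo_space H Hs)"
  using homeomorphic_imp_surjective_map[OF phi] by blast

lemma phi_inj: "y \<in> topspace TY \<Longrightarrow> y' \<in> topspace TY \<Longrightarrow> \<phi> y = \<phi> y' \<Longrightarrow> y = y'"
  using homeomorphic_imp_injective_map[OF phi] unfolding inj_on_def by blast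

lemma phi_surj: "z \<in> topspace (odo_space H Hs) \<Longrightarrow> \<exists>y\<in>topspace TY. \<phi> y = z"
  using homeomorphic_imp_surjective_map[OF phi] by (metis imageE)

lemma phi_lev: "y \<in> topspace TY \<Longrightarrow> \<phi> y n \<in> lcosets\<^bsub>H\<^esub> (Hs n)"
  using phi_top unfolding odo_topspace by blast

lemma phi_b: "h \<in> carrier H \<Longrightarrow> y \<in> topspace TY \<Longrightarrow> \<phi> (b h y) n = h <#\<^bsub>H\<^esub> \<phi> y n"
  using phi_eq unfolding odo_act_def by simp

lemma phi_eq_below: "y \<in> topspace TY \<Longrightarrow> y' \<in> topspace TY \<Longrightarrow> \<phi> y m = \<phi> y' m \<Longrightarrow> n \<le> m \<Longrightarrow> \<phi> y n = \<phi> y' n"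
  using odo_eq_below[OF grpH chainH phi_top phi_top] by blast

lemma free_unique:
  assumes g: "g \<in> carrier G" and g': "g' \<in> carrier G" and x: "x \<in> topspace TX" and eq: "a g x = a g' x"
  shows "g = g'"
proof -
  interpret group G by (rule grpG)
  have "a (inv\<^bsub>G\<^esub> g' \<otimes>\<^bsub>G\<^esub> g) x = a (inv\<^bsub>G\<^esub> g') (a g' x)" using a_mult g g' x eq by simp
  also have "\<dots> = a (inv\<^bsub>G\<^esub> g' \<otimes>\<^bsub>G\<^esub> g') x" using a_mult[of "inv\<^bsub>G\<^esub> g'" g' x] g' x by simp
  also have "\<dots> = x" using a_one x g' by simp
  finally have "inv\<^bsub>G\<^esub> g' \<otimes>\<^bsub>G\<^esub> g = \<one>\<^bsub>G\<^esub>" using freeG g g' x unfolding free_action_def by blast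
  then show ?thesis using g g' by (metis inv_equality inv_inv inv_closed)
qed

lemma freeH_unique:
  assumes g: "g \<in> carrier H" and g': "g' \<in> carrier H" and x: "x \<in> topspace TY" and eq: "b g x = b g' x"
  shows "g = g'"
proof -
  interpret group H by (rule grpH)
  have "b (inv\<^bsub>H\<^esub> g' \<otimes>\<^bsub>H\<^esub> g) x = b (inv\<^bsub>H\<^esub> g') (b g' x)" using b_mult g g' x eq by simp
  also have "\<dots> = b (inv\<^bsub>H\<^esub> g' \<otimes>\<^bsub>H\<^esub> g') x" using b_mult[of "inv\<^bsub>H\<^esub> g'" g' x] g' x by simp
  also have "\<dots> = x" using b_one x g' by simp
  finally have "inv\<^bsub>H\<^esub> g' \<otimes>\<^bsub>H\<^esub> g = \<one>\<^bsub>H\<^esub>" using freeH g g' x unfolding free_action_def by blast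
  then show ?thesis using g g' by (metis inv_equality inv_inv inv_closed)
qed

lemma orbit_G_to_H:
  assumes x: "x \<in> topspace TX" and g: "g \<in> carrier G"
  shows "\<exists>h\<in>carrier H. \<psi>' (a g x) = b h (\<psi>' x)"
proof -
  have "\<psi>' (a g x) \<in> \<psi>' ` orbit_of G a x" unfolding orbit_of_def using g by blast
  then show ?thesis using orb x unfolding orbit_of_def by auto
qed

definition c :: "'h \<Rightarrow> 'y \<Rightarrow> 'g" where
  "c h y = (THE g. g \<in> carrier G \<and> \<psi> (b h y) = a g (\<psi> y))"

lemma c_ex: assumes h: "h \<in> carrier H" and y: "y \<in> topspace TY"
  shows "c h y \<in> carrier G \<and> \<psi> (b h y) = a (c h y) (\<psi> y)"
proof -
  let ?x = "\<psi> y"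
  have x: "?x \<in> topspace TX" using psi_top y .
  have "b h y \<in> orbit_of H b (\<psi>' ?x)" using psi'_psi[OF y] h unfolding orbit_of_def by auto
  then obtain g where g: "g \<in> carrier G" "b h y = \<psi>' (a g ?x)" using orb x unfolding orbit_of_def by blast
  then have "\<psi> (b h y) = a g ?x" using psi_psi' a_top x by simp
  then have ex: "g \<in> carrier G \<and> \<psi> (b h y) = a g (\<psi> y)" using g by blast
  show ?thesis unfolding c_def
    by (rule theI[of _ g]) (use ex free_unique x in auto)
qed

lemma c_carrier: "h \<in> carrier H \<Longrightarrow> y \<in> topspace TY \<Longrightarrow> c h y \<in> carrier G"
  using c_ex by blast

lemma c_eq: "h \<in> carrier H \<Longrightarrow> y \<in> topspace TY \<Longrightarrow> \<psi> (b h y) = a (c h y) (\<psi> y)"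
  using c_ex by blast

lemma c_unique: "h \<in> carrier H \<Longrightarrow> y \<in> topspace TY \<Longrightarrow> g \<in> carrier G \<Longrightarrow> \<psi> (b h y) = a g (\<psi> y) \<Longrightarrow> c h y = g"
  using c_ex free_unique psi_top by metis

lemma c_cocycle:
  assumes h1: "h1 \<in> carrier H" and h2: "h2 \<in> carrier H" and y: "y \<in> topspace TY"
  shows "c (h1 \<otimes>\<^bsub>H\<^esub> h2) y = c h1 (b h2 y) \<otimes>\<^bsub>G\<^esub> c h2 y"
proof (rule c_unique)
  interpret group G by (rule grpG)
  show "h1 \<otimes>\<^bsub>H\<^esub> h2 \<in> carrier H" using h1 h2 grpH group.is_monoid monoid.m_closed by fast
  show "y \<in> topspace TY" by (rule y)
  show "c h1 (b h2 y) \<otimes>\<^bsub>G\<^esub> c h2 y \<in> carrier G" using c_carrier b_top h1 h2 y by simp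
  have "\<psi> (b (h1 \<otimes>\<^bsub>H\<^esub> h2) y) = \<psi> (b h1 (b h2 y))" using b_mult h1 h2 y by simp
  also have "\<dots> = a (c h1 (b h2 y)) (\<psi> (b h2 y))" using c_eq h1 b_top h2 y by simp
  also have "\<dots> = a (c h1 (b h2 y)) (a (c h2 y) (\<psi> y))" using c_eq h2 y by simp
  also have "\<dots> = a (c h1 (b h2 y) \<otimes>\<^bsub>G\<^esub> c h2 y) (\<psi> y)"
    using a_mult c_carrier b_top h1 h2 y psi_top by simp
  finally show "\<psi> (b (h1 \<otimes>\<^bsub>H\<^esub> h2) y) = a (c h1 (b h2 y) \<otimes>\<^bsub>G\<^esub> c h2 y) (\<psi> y)" .
qed


lemma proj_cont: "continuous_map TY (discrete_topology (lcosets\<^bsub>H\<^esub> (Hs n))) (\<lambda>y. \<phi> y n)"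
  using continuous_map_compose[OF homeomorphic_imp_continuous_map[OF phi] odo_proj_cont[of H Hs n]]
  by (simp add: o_def)

lemma cyl_open: "openin TY {y' \<in> topspace TY. \<phi> y' n = \<phi> y n}"
proof (cases "\<phi> y n \<in> lcosets\<^bsub>H\<^esub> (Hs n)")
  case True
  then show ?thesis using openin_continuous_map_preimage[OF proj_cont[of n], where U="{\<phi> y n}"] by simp
next
  case False
  then have "{y' \<in> topspace TY. \<phi> y' n = \<phi> y n} = {}" using phi_lev[of _ n] by force
  then show ?thesis by (metis openin_empty)
qed

lemma cyl_in:
  assumes V: "openin TY V" and y: "y \<in> V"
  shows "\<exists>n. \<forall>y'\<in>topspace TY. \<phi> y' n = \<phi> y n \<longrightarrow> y' \<in> V"
proof -
  have Vs: "V \<subseteq> topspace TY" using V openin_subset by blast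
  have "openin (odo_space H Hs) (\<phi> ` V)" using homeomorphic_map_openness[OF phi Vs] V by simp
  then obtain n where n: "\<forall>x'\<in>topspace (odo_space H Hs). x' n = \<phi> y n \<longrightarrow> x' \<in> \<phi> ` V"
    using odo_cyl[OF grpH chainH] y by blast
  show ?thesis
  proof (intro exI ballI impI)
    fix y' assume y': "y' \<in> topspace TY" "\<phi> y' n = \<phi> y n"
    then have "\<phi> y' \<in> \<phi> ` V" using n phi_top by blast
    then show "y' \<in> V" using phi_inj y' Vs by blast
  qed
qed

lemma c_loc:
  assumes s: "s \<in> carrier H" and y: "y \<in> topspace TY"
  shows "\<exists>n. \<forall>y'\<in>topspace TY. \<phi> y' n = \<phi> y n \<longrightarrow> c s y' = c s y"
proof -
  obtain g V where gV: "g \<in> carrier G" "openin TY V" "y \<in> V" "\<forall>w\<in>V. \<psi> (b s w) = a g (\<psi> w)"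
    using loc s y by blast
  have Vs: "V \<subseteq> topspace TY" using gV openin_subset by blast
  have cV: "w \<in> V \<Longrightarrow> c s w = g" for w using c_unique[OF s _ gV(1)] gV(4) Vs by blast
  obtain n where n: "\<forall>y'\<in>topspace TY. \<phi> y' n = \<phi> y n \<longrightarrow> y' \<in> V" using cyl_in gV by blast
  show ?thesis
  proof (intro exI[of _ n] ballI impI)
    fix y' assume "y' \<in> topspace TY" "\<phi> y' n = \<phi> y n"
    then have "y' \<in> V" using n by blast
    then show "c s y' = c s y" using cV[of y'] cV[of y] gV(3) by simp
  qed
qed

lemma compY: "compact_space TY"
  using homeomorphic_compact_space[OF homeomorphic_maps_imp_homeomorphic_space[OF psi]] compX by simp

definition unif :: "'h \<Rightarrow> nat \<Rightarrow> bool" where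
  "unif h N \<longleftrightarrow> (\<forall>y\<in>topspace TY. \<forall>y'\<in>topspace TY. \<phi> y N = \<phi> y' N \<longrightarrow> c h y = c h y')"

lemma unif_mono: "unif h N \<Longrightarrow> N \<le> M \<Longrightarrow> unif h M"
  unfolding unif_def using phi_eq_below by blast

lemma c_unif:
  assumes s: "s \<in> carrier H"
  shows "\<exists>N. unif s N"
proof -
  define nf where "nf y = (SOME n. \<forall>y'\<in>topspace TY. \<phi> y' n = \<phi> y n \<longrightarrow> c s y' = c s y)" for y
  have nf: "y \<in> topspace TY \<Longrightarrow> \<forall>y'\<in>topspace TY. \<phi> y' (nf y) = \<phi> y (nf y) \<longrightarrow> c s y' = c s y" for y
    unfolding nf_def by (rule someI_ex) (rule c_loc[OF s])
  define cyl where "cyl y = {y' \<in> topspace TY. \<phi> y' (nf y) = \<phi> y (nf y)}" for y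
  have "compactin TY (topspace TY)" using compY unfolding compact_space_def .
  moreover have "\<forall>U\<in>cyl ` topspace TY. openin TY U" unfolding cyl_def using cyl_open by blast
  moreover have "topspace TY \<subseteq> \<Union>(cyl ` topspace TY)" unfolding cyl_def by blast
  ultimately obtain F where F: "finite F" "F \<subseteq> cyl ` topspace TY" "topspace TY \<subseteq> \<Union>F"
    unfolding compactin_def by meson
  then obtain Y0 where Y0: "Y0 \<subseteq> topspace TY" "finite Y0" "F = cyl ` Y0"
    by (meson finite_subset_image)
  define N where "N = Max (insert 0 (nf ` Y0))"
  have le: "y1 \<in> Y0 \<Longrightarrow> nf y1 \<le> N" for y1 unfolding N_def using Y0 by simp
  show ?thesis unfolding unif_def
  proof (intro exI ballI impI)
    fix y y' assume y: "y \<in> topspace TY" and y': "y' \<in> topspace TY" and eq: "\<phi> y N = \<phi> y' N"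
    obtain y1 where y1: "y1 \<in> Y0" "y \<in> cyl y1" using F(3) Y0(3) y by blast
    have y1t: "y1 \<in> topspace TY" using y1 Y0 by blast
    have e1: "\<phi> y (nf y1) = \<phi> y1 (nf y1)" using y1 cyl_def by blast
    have e2: "\<phi> y' (nf y1) = \<phi> y1 (nf y1)" using phi_eq_below[OF y y' eq le[OF y1(1)]] e1 by simp
    have "c s y = c s y1" using nf[OF y1t] y e1 by blast
    moreover have "c s y' = c s y1" using nf[OF y1t] y' e2 by blast
    ultimately show "c s y = c s y'" by simp
  qed
qed

lemma exN: "\<exists>N. \<forall>s\<in>S \<union> (\<lambda>s. inv\<^bsub>H\<^esub> s) ` S. unif s N"
proof -
  let ?S = "S \<union> (\<lambda>s. inv\<^bsub>H\<^esub> s) ` S"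
  have fin: "finite ?S" using finS by simp
  have sub: "s \<in> ?S \<Longrightarrow> s \<in> carrier H" for s
  proof -
    assume "s \<in> ?S"
    then consider "s \<in> S" | t where "t \<in> S" "s = inv\<^bsub>H\<^esub> t" by blast
    then show "s \<in> carrier H"
    proof cases
      case 1 then show ?thesis using SH by blast
    next
      case 2 then show ?thesis using SH group.inv_closed[OF grpH] by blast
    qed
  qed
  define nf where "nf s = (SOME N. unif s N)" for s
  have nf: "s \<in> ?S \<Longrightarrow> unif s (nf s)" for s unfolding nf_def by (rule someI_ex) (rule c_unif[OF sub])
  define N where "N = Max (insert 0 (nf ` ?S))"
  have le: "s \<in> ?S \<Longrightarrow> nf s \<le> N" for s unfolding N_def using fin by simp
  have "s \<in> ?S \<Longrightarrow> unif s N" for s using unif_mono[OF nf le] .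
  then show ?thesis by blast
qed

definition N :: nat where "N = (SOME N. \<forall>s\<in>S \<union> (\<lambda>s. inv\<^bsub>H\<^esub> s) ` S. unif s N)"

lemma N_gen: "s \<in> S \<union> (\<lambda>s. inv\<^bsub>H\<^esub> s) ` S \<Longrightarrow> unif s N"
  unfolding N_def using someI_ex[OF exN] by blast

lemma unif_all: "h \<in> carrier H \<Longrightarrow> unif h N"
proof -
  assume "h \<in> carrier H"
  then have "h \<in> generate H S" using genS by simp
  then show "unif h N"
  proof (induction rule: generate.induct)
    case one
    have o1: "\<one>\<^bsub>H\<^esub> \<in> carrier H" using grpH by (simp add: group.is_monoid monoid.one_closed)
    have o2: "\<one>\<^bsub>G\<^esub> \<in> carrier G" using grpG by (simp add: group.is_monoid monoid.one_closed)
    have "y \<in> topspace TY \<Longrightarrow> c \<one>\<^bsub>H\<^esub> y = \<one>\<^bsub>G\<^esub>" for y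
      using c_unique[OF o1 _ o2] b_one a_one psi_top by simp
    then show ?case unfolding unif_def by simp
  next
    case (incl h)
    then show ?case using N_gen by blast
  next
    case (inv h)
    then show ?case using N_gen by blast
  next
    case (eng h1 h2)
    have c1: "h1 \<in> carrier H" "h2 \<in> carrier H" using eng.hyps genS by auto
    show ?case unfolding unif_def
    proof (intro ballI impI)
      fix y y' assume y: "y \<in> topspace TY" and y': "y' \<in> topspace TY" and eq: "\<phi> y N = \<phi> y' N"
      have eq2: "\<phi> (b h2 y) N = \<phi> (b h2 y') N" using phi_b c1 y y' eq by simp
      have "c h1 (b h2 y) = c h1 (b h2 y')" using eng.IH(1) unfolding unif_def using eq2 b_top c1 y y' by blast
      moreover have "c h2 y = c h2 y'" using eng.IH(2) unfolding unif_def using eq y y' by blast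
      ultimately show "c (h1 \<otimes>\<^bsub>H\<^esub> h2) y = c (h1 \<otimes>\<^bsub>H\<^esub> h2) y'"
        using c_cocycle c1 y y' by simp
    qed
  qed
qed

lemma Hs_carrier: "k \<in> Hs m \<Longrightarrow> k \<in> carrier H"
  by (rule subgroup.mem_carrier[OF sgH])

lemma oneH: "\<one>\<^bsub>H\<^esub> \<in> carrier H" using grpH by (simp add: group.is_monoid monoid.one_closed)
lemma oneG: "\<one>\<^bsub>G\<^esub> \<in> carrier G" using grpG by (simp add: group.is_monoid monoid.one_closed)

lemma e0_top: "(\<lambda>n. Hs n) \<in> topspace (odo_space H Hs)"
proof -
  have "Hs n \<in> lcosets\<^bsub>H\<^esub> (Hs n)" for n
    using lcos_in_lcosets[OF oneH, of "Hs n"]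
      group.lcos_mult_one[OF grpH subgroup.subset[OF sgH]] by simp
  moreover have "Hs (Suc n) \<subseteq> Hs n" for n using chainH unfolding fi_chain_def by blast
  ultimately show ?thesis unfolding odo_topspace by blast
qed

definition y0 :: 'y where "y0 = (SOME y. y \<in> topspace TY \<and> \<phi> y = (\<lambda>n. Hs n))"

lemma y0: "y0 \<in> topspace TY" "\<phi> y0 = (\<lambda>n. Hs n)"
proof -
  have "\<exists>y. y \<in> topspace TY \<and> \<phi> y = (\<lambda>n. Hs n)" using phi_surj[OF e0_top] by blast
  then have "y0 \<in> topspace TY \<and> \<phi> y0 = (\<lambda>n. Hs n)" unfolding y0_def by (rule someI_ex)
  then show "y0 \<in> topspace TY" "\<phi> y0 = (\<lambda>n. Hs n)" by auto
qed

definition x0 :: 'x where "x0 = \<psi> y0"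

lemma x0: "x0 \<in> topspace TX" "\<psi>' x0 = y0"
  unfolding x0_def using psi_top psi'_psi y0 by auto

definition \<theta> :: "'h \<Rightarrow> 'g" where "\<theta> h = c h y0"

lemma theta_carrier: "h \<in> carrier H \<Longrightarrow> \<theta> h \<in> carrier G"
  unfolding \<theta>_def using c_carrier y0 by blast

lemma theta_eq: "h \<in> carrier H \<Longrightarrow> \<psi> (b h y0) = a (\<theta> h) x0"
  unfolding \<theta>_def x0_def using c_eq y0 by blast

lemma c_const: "h \<in> carrier H \<Longrightarrow> y \<in> topspace TY \<Longrightarrow> \<phi> y N = Hs N \<Longrightarrow> c h y = \<theta> h"
proof -
  assume h: "h \<in> carrier H" and y: "y \<in> topspace TY" and e: "\<phi> y N = Hs N"
  have "\<phi> y N = \<phi> y0 N" using e y0(2) by simp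
  then show "c h y = \<theta> h" unfolding \<theta>_def using unif_all[OF h] y y0(1) unfolding unif_def by blast
qed

lemma lev_N:
  assumes y: "y \<in> topspace TY" and m: "\<phi> y m = Hs m" and Nm: "N \<le> m"
  shows "\<phi> y N = Hs N"
proof -
  have "\<phi> y m \<subseteq> \<phi> y N" using odo_mono[OF phi_top[OF y] Nm] .
  moreover have "\<one>\<^bsub>H\<^esub> \<in> Hs m" using sgH subgroup.one_closed by blast
  ultimately have "\<one>\<^bsub>H\<^esub> \<in> \<phi> y N" using m by blast
  then have "\<phi> y N = \<one>\<^bsub>H\<^esub> <#\<^bsub>H\<^esub> Hs N" using lcosets_eq_of_mem[OF grpH sgH phi_lev[OF y]] by blast
  then show ?thesis using group.lcos_mult_one[OF grpH subgroup.subset[OF sgH]] by simp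
qed

lemma theta_mult:
  assumes k: "k \<in> carrier H" and h: "h \<in> Hs N"
  shows "\<theta> (k \<otimes>\<^bsub>H\<^esub> h) = \<theta> k \<otimes>\<^bsub>G\<^esub> \<theta> h"
proof -
  have hc: "h \<in> carrier H" using Hs_carrier h .
  have "\<phi> (b h y0) N = h <#\<^bsub>H\<^esub> Hs N" using phi_b[OF hc y0(1)] y0(2) by simp
  also have "\<dots> = Hs N" using group.lcos_self_eq_iff[OF grpH sgH hc] h by simp
  finally have "c k (b h y0) = \<theta> k" using c_const k b_top hc y0 by blast
  then show ?thesis unfolding \<theta>_def using c_cocycle[OF k hc y0(1)] by simp
qed

lemma theta_inj:
  assumes k: "k \<in> carrier H" and k': "k' \<in> carrier H" and eq: "\<theta> k = \<theta> k'"
  shows "k = k'"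
proof -
  have "\<psi> (b k y0) = \<psi> (b k' y0)" using theta_eq k k' eq by simp
  then have "\<psi>' (\<psi> (b k y0)) = \<psi>' (\<psi> (b k' y0))" by simp
  then have "b k y0 = b k' y0" using psi'_psi b_top k k' y0 by simp
  then show ?thesis using freeH_unique k k' y0 by blast
qed

lemma decomp:
  assumes y: "y \<in> topspace TY" and Nm: "N \<le> m"
  shows "\<exists>k\<in>carrier H. \<exists>y'\<in>topspace TY. \<phi> y m = k <#\<^bsub>H\<^esub> Hs m \<and> \<phi> y' m = Hs m
          \<and> \<psi> y = a (\<theta> k) (\<psi> y')"
proof -
  have Ks: "Hs m \<subseteq> carrier H" by (rule subgroup.subset[OF sgH])
  obtain k where k: "k \<in> carrier H" "\<phi> y m = k <#\<^bsub>H\<^esub> Hs m"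
    using phi_lev[OF y, of m] by (elim lcosetsE) blast
  have ik: "inv\<^bsub>H\<^esub> k \<in> carrier H" by (rule group.inv_closed[OF grpH k(1)])
  define y' where "y' = b (inv\<^bsub>H\<^esub> k) y"
  have y't: "y' \<in> topspace TY" unfolding y'_def by (rule b_top[OF ik y])
  have "\<phi> y' m = inv\<^bsub>H\<^esub> k <#\<^bsub>H\<^esub> (k <#\<^bsub>H\<^esub> Hs m)" unfolding y'_def using phi_b[OF ik y] k(2) by simp
  also have "\<dots> = (inv\<^bsub>H\<^esub> k \<otimes>\<^bsub>H\<^esub> k) <#\<^bsub>H\<^esub> Hs m" by (rule group.lcos_m_assoc[OF grpH Ks ik k(1)])
  also have "inv\<^bsub>H\<^esub> k \<otimes>\<^bsub>H\<^esub> k = \<one>\<^bsub>H\<^esub>" by (rule group.l_inv[OF grpH k(1)])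
  also have "\<one>\<^bsub>H\<^esub> <#\<^bsub>H\<^esub> Hs m = Hs m" by (rule group.lcos_mult_one[OF grpH Ks])
  finally have y'm: "\<phi> y' m = Hs m" .
  have "b k y' = b (k \<otimes>\<^bsub>H\<^esub> inv\<^bsub>H\<^esub> k) y" unfolding y'_def by (rule b_mult[OF k(1) ik y, symmetric])
  also have "k \<otimes>\<^bsub>H\<^esub> inv\<^bsub>H\<^esub> k = \<one>\<^bsub>H\<^esub>" by (rule group.r_inv[OF grpH k(1)])
  also have "b \<one>\<^bsub>H\<^esub> y = y" by (rule b_one[OF y])
  finally have bk: "b k y' = y" .
  have "\<psi> y = \<psi> (b k y')" using bk by simp
  also have "\<dots> = a (c k y') (\<psi> y')" by (rule c_eq[OF k(1) y't])
  also have "c k y' = \<theta> k" by (rule c_const[OF k(1) y't lev_N[OF y't y'm Nm]])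
  finally have "\<psi> y = a (\<theta> k) (\<psi> y')" .
  then show ?thesis using k y't y'm by blast
qed

lemma stab:
  assumes Nm: "N \<le> m" and x1: "x1 \<in> topspace TX" and x2: "x2 \<in> topspace TX"
    and l1: "\<phi> (\<psi>' x1) m = Hs m" and l2: "\<phi> (\<psi>' x2) m = Hs m"
    and g: "g \<in> carrier G" and eq: "a g x1 = x2"
  shows "g \<in> \<theta> ` Hs m"
proof -
  obtain h where h: "h \<in> carrier H" "\<psi>' (a g x1) = b h (\<psi>' x1)" using orbit_G_to_H[OF x1 g] by blast
  have y1: "\<psi>' x1 \<in> topspace TY" by (rule psi'_top[OF x1])
  have "Hs m = \<phi> (\<psi>' x2) m" using l2 by simp
  also have "\<dots> = \<phi> (b h (\<psi>' x1)) m" using h(2) eq by simp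
  also have "\<dots> = h <#\<^bsub>H\<^esub> \<phi> (\<psi>' x1) m" by (rule phi_b[OF h(1) y1])
  finally have "h <#\<^bsub>H\<^esub> Hs m = Hs m" using l1 by simp
  then have hm: "h \<in> Hs m" using group.lcos_self_eq_iff[OF grpH sgH h(1)] by simp
  have "x2 = \<psi> (\<psi>' x2)" using psi_psi' x2 by simp
  also have "\<dots> = \<psi> (b h (\<psi>' x1))" using h(2) eq by simp
  also have "\<dots> = a (c h (\<psi>' x1)) (\<psi> (\<psi>' x1))" by (rule c_eq[OF h(1) y1])
  also have "\<psi> (\<psi>' x1) = x1" by (rule psi_psi'[OF x1])
  also have "c h (\<psi>' x1) = \<theta> h" by (rule c_const[OF h(1) y1 lev_N[OF y1 l1 Nm]])
  finally have "a g x1 = a (\<theta> h) x1" using eq by simp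
  then have "g = \<theta> h" using free_unique[OF g theta_carrier[OF h(1)] x1] by simp
  then show ?thesis using hm by blast
qed

lemma a_inv_cancel: "g \<in> carrier G \<Longrightarrow> x \<in> topspace TX \<Longrightarrow> a (inv\<^bsub>G\<^esub> g) (a g x) = x"
proof -
  assume g: "g \<in> carrier G" and x: "x \<in> topspace TX"
  have ig: "inv\<^bsub>G\<^esub> g \<in> carrier G" by (rule group.inv_closed[OF grpG g])
  have "a (inv\<^bsub>G\<^esub> g) (a g x) = a (inv\<^bsub>G\<^esub> g \<otimes>\<^bsub>G\<^esub> g) x" by (rule a_mult[OF ig g x, symmetric])
  also have "inv\<^bsub>G\<^esub> g \<otimes>\<^bsub>G\<^esub> g = \<one>\<^bsub>G\<^esub>" by (rule group.l_inv[OF grpG g])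
  also have "a \<one>\<^bsub>G\<^esub> x = x" by (rule a_one[OF x])
  finally show ?thesis .
qed

lemma HsN: "N \<le> m \<Longrightarrow> Hs m \<subseteq> Hs N"
  by (rule fi_chain_mono[OF chainH])

lemma theta_one: "\<theta> \<one>\<^bsub>H\<^esub> = \<one>\<^bsub>G\<^esub>"
proof -
  have o: "\<one>\<^bsub>H\<^esub> \<in> Hs N" by (rule subgroup.one_closed[OF sgH])
  have "\<theta> (\<one>\<^bsub>H\<^esub> \<otimes>\<^bsub>H\<^esub> \<one>\<^bsub>H\<^esub>) = \<theta> \<one>\<^bsub>H\<^esub> \<otimes>\<^bsub>G\<^esub> \<theta> \<one>\<^bsub>H\<^esub>" by (rule theta_mult[OF oneH o])
  moreover have "\<one>\<^bsub>H\<^esub> \<otimes>\<^bsub>H\<^esub> \<one>\<^bsub>H\<^esub> = \<one>\<^bsub>H\<^esub>" using oneH grpH by (simp add: group.is_monoid monoid.l_one)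
  ultimately have "\<theta> \<one>\<^bsub>H\<^esub> = \<theta> \<one>\<^bsub>H\<^esub> \<otimes>\<^bsub>G\<^esub> \<theta> \<one>\<^bsub>H\<^esub>" by simp
  then show ?thesis using group.l_cancel_one'[OF grpG theta_carrier[OF oneH] theta_carrier[OF oneH]] by simp
qed

lemma theta_inv:
  assumes h: "h \<in> Hs N" shows "\<theta> (inv\<^bsub>H\<^esub> h) = inv\<^bsub>G\<^esub> \<theta> h"
proof -
  have hc: "h \<in> carrier H" by (rule Hs_carrier[OF h])
  have ih: "inv\<^bsub>H\<^esub> h \<in> carrier H" by (rule group.inv_closed[OF grpH hc])
  have "\<theta> (inv\<^bsub>H\<^esub> h \<otimes>\<^bsub>H\<^esub> h) = \<theta> (inv\<^bsub>H\<^esub> h) \<otimes>\<^bsub>G\<^esub> \<theta> h" by (rule theta_mult[OF ih h])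
  moreover have "inv\<^bsub>H\<^esub> h \<otimes>\<^bsub>H\<^esub> h = \<one>\<^bsub>H\<^esub>" by (rule group.l_inv[OF grpH hc])
  ultimately have "\<theta> (inv\<^bsub>H\<^esub> h) \<otimes>\<^bsub>G\<^esub> \<theta> h = \<one>\<^bsub>G\<^esub>" using theta_one by simp
  then show ?thesis using group.inv_equality[OF grpG _ theta_carrier[OF hc] theta_carrier[OF ih]] by simp
qed

lemma theta_sub:
  assumes Nm: "N \<le> m" shows "subgroup (\<theta> ` Hs m) G"
proof (rule group.subgroupI[OF grpG])
  have sub: "Hs m \<subseteq> Hs N" by (rule HsN[OF Nm])
  show "\<theta> ` Hs m \<subseteq> carrier G"
  proof
    fix g assume "g \<in> \<theta> ` Hs m"
    then obtain h where "h \<in> Hs m" "g = \<theta> h" by blast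
    then show "g \<in> carrier G" using theta_carrier[OF Hs_carrier] by simp
  qed
  show "\<theta> ` Hs m \<noteq> {}" using subgroup.one_closed[OF sgH, of m] by blast
  show "inv\<^bsub>G\<^esub> g \<in> \<theta> ` Hs m" if gin: "g \<in> \<theta> ` Hs m" for g
  proof -
    obtain h where h: "h \<in> Hs m" "g = \<theta> h" using gin by blast
    have hN: "h \<in> Hs N" using h(1) sub by blast
    have "inv\<^bsub>G\<^esub> g = \<theta> (inv\<^bsub>H\<^esub> h)" using theta_inv[OF hN] h(2) by simp
    moreover have "inv\<^bsub>H\<^esub> h \<in> Hs m" by (rule subgroup.m_inv_closed[OF sgH h(1)])
    ultimately show ?thesis by blast
  qed
  show "g1 \<otimes>\<^bsub>G\<^esub> g2 \<in> \<theta> ` Hs m" if gin: "g1 \<in> \<theta> ` Hs m" "g2 \<in> \<theta> ` Hs m" for g1 g2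
  proof -
    obtain h1 h2 where h: "h1 \<in> Hs m" "g1 = \<theta> h1" "h2 \<in> Hs m" "g2 = \<theta> h2" using gin by blast
    have hN: "h2 \<in> Hs N" using h(3) sub by blast
    have "g1 \<otimes>\<^bsub>G\<^esub> g2 = \<theta> (h1 \<otimes>\<^bsub>H\<^esub> h2)" using theta_mult[OF Hs_carrier[OF h(1)] hN] h(2,4) by simp
    moreover have "h1 \<otimes>\<^bsub>H\<^esub> h2 \<in> Hs m" by (rule subgroup.m_closed[OF sgH h(1) h(3)])
    ultimately show ?thesis by blast
  qed
qed

lemma theta_coset:
  assumes k: "k \<in> carrier H" and Nm: "N \<le> m"
  shows "\<theta> ` (k <#\<^bsub>H\<^esub> Hs m) = \<theta> k <#\<^bsub>G\<^esub> \<theta> ` Hs m"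
proof -
  have sub: "Hs m \<subseteq> Hs N" by (rule HsN[OF Nm])
  have "\<theta> ` (k <#\<^bsub>H\<^esub> Hs m) = (\<lambda>h. \<theta> (k \<otimes>\<^bsub>H\<^esub> h)) ` Hs m" unfolding l_coset_def by auto
  also have "\<dots> = (\<lambda>h. \<theta> k \<otimes>\<^bsub>G\<^esub> \<theta> h) ` Hs m"
  proof (rule image_cong[OF refl])
    fix h assume "h \<in> Hs m"
    then have "h \<in> Hs N" using sub by blast
    then show "\<theta> (k \<otimes>\<^bsub>H\<^esub> h) = \<theta> k \<otimes>\<^bsub>G\<^esub> \<theta> h" by (rule theta_mult[OF k])
  qed
  also have "\<dots> = \<theta> k <#\<^bsub>G\<^esub> \<theta> ` Hs m" unfolding l_coset_def by auto
  finally show ?thesis .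
qed

lemma level_rep:
  assumes g: "g \<in> carrier G" and Nm: "N \<le> m"
  shows "\<exists>k\<in>carrier H. g <#\<^bsub>G\<^esub> \<theta> ` Hs m = \<theta> k <#\<^bsub>G\<^esub> \<theta> ` Hs m"
proof -
  define x where "x = a g x0"
  have xt: "x \<in> topspace TX" unfolding x_def by (rule a_top[OF g x0(1)])
  obtain k y' where ky: "k \<in> carrier H" "y' \<in> topspace TY" "\<phi> y' m = Hs m"
    "\<psi> (\<psi>' x) = a (\<theta> k) (\<psi> y')"
    using decomp[OF psi'_top[OF xt] Nm] by blast
  define x' where "x' = \<psi> y'"
  have x't: "x' \<in> topspace TX" unfolding x'_def by (rule psi_top[OF ky(2)])
  have xeq: "x = a (\<theta> k) x'" using ky(4) psi_psi'[OF xt] unfolding x'_def by simp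
  have tk: "\<theta> k \<in> carrier G" by (rule theta_carrier[OF ky(1)])
  have itk: "inv\<^bsub>G\<^esub> \<theta> k \<in> carrier G" by (rule group.inv_closed[OF grpG tk])
  have e: "inv\<^bsub>G\<^esub> \<theta> k \<otimes>\<^bsub>G\<^esub> g \<in> carrier G" using itk g grpG by (simp add: group.is_monoid monoid.m_closed)
  have "a (inv\<^bsub>G\<^esub> \<theta> k \<otimes>\<^bsub>G\<^esub> g) x0 = a (inv\<^bsub>G\<^esub> \<theta> k) (a g x0)" by (rule a_mult[OF itk g x0(1)])
  also have "\<dots> = x'" using a_inv_cancel[OF tk x't] xeq unfolding x_def by simp
  finally have ae: "a (inv\<^bsub>G\<^esub> \<theta> k \<otimes>\<^bsub>G\<^esub> g) x0 = x'" .
  have l1: "\<phi> (\<psi>' x0) m = Hs m" using x0(2) y0(2) by simp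
  have l2: "\<phi> (\<psi>' x') m = Hs m" unfolding x'_def using psi'_psi[OF ky(2)] ky(3) by simp
  have "inv\<^bsub>G\<^esub> \<theta> k \<otimes>\<^bsub>G\<^esub> g \<in> \<theta> ` Hs m" by (rule stab[OF Nm x0(1) x't l1 l2 e ae])
  then have "g <#\<^bsub>G\<^esub> \<theta> ` Hs m = \<theta> k <#\<^bsub>G\<^esub> \<theta> ` Hs m"
    by (rule group.lcos_eq_of_inv[OF grpG theta_sub[OF Nm] g tk])
  then show ?thesis using ky(1) by blast
qed

lemma lcos_img:
  assumes Nm: "N \<le> m"
  shows "lcosets\<^bsub>G\<^esub> (\<theta> ` Hs m) = (\<lambda>C. \<theta> ` C) ` (lcosets\<^bsub>H\<^esub> (Hs m))"
proof (rule equalityI; rule subsetI)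
  fix D assume "D \<in> lcosets\<^bsub>G\<^esub> (\<theta> ` Hs m)"
  then obtain g where g: "g \<in> carrier G" "D = g <#\<^bsub>G\<^esub> \<theta> ` Hs m" by (elim lcosetsE) blast
  obtain k where k: "k \<in> carrier H" "g <#\<^bsub>G\<^esub> \<theta> ` Hs m = \<theta> k <#\<^bsub>G\<^esub> \<theta> ` Hs m"
    using level_rep[OF g(1) Nm] by blast
  have "D = \<theta> ` (k <#\<^bsub>H\<^esub> Hs m)" using g(2) k(2) theta_coset[OF k(1) Nm] by simp
  moreover have "k <#\<^bsub>H\<^esub> Hs m \<in> lcosets\<^bsub>H\<^esub> (Hs m)" by (rule lcos_in_lcosets[OF k(1)])
  ultimately show "D \<in> (\<lambda>C. \<theta> ` C) ` (lcosets\<^bsub>H\<^esub> (Hs m))" by blast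
next
  fix D assume "D \<in> (\<lambda>C. \<theta> ` C) ` (lcosets\<^bsub>H\<^esub> (Hs m))"
  then obtain C where C: "C \<in> lcosets\<^bsub>H\<^esub> (Hs m)" "D = \<theta> ` C" by blast
  obtain k where k: "k \<in> carrier H" "C = k <#\<^bsub>H\<^esub> Hs m" using C(1) by (elim lcosetsE) blast
  have "D = \<theta> k <#\<^bsub>G\<^esub> \<theta> ` Hs m" using C(2) k(2) theta_coset[OF k(1) Nm] by simp
  then show "D \<in> lcosets\<^bsub>G\<^esub> (\<theta> ` Hs m)" using lcos_in_lcosets[OF theta_carrier[OF k(1)]] by simp
qed

lemma equiv:
  assumes x: "x \<in> topspace TX" and g: "g \<in> carrier G" and Nm: "N \<le> m"
  shows "\<theta> ` (\<phi> (\<psi>' (a g x)) m) = g <#\<^bsub>G\<^esub> \<theta> ` (\<phi> (\<psi>' x) m)"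
proof -
  have gx: "a g x \<in> topspace TX" by (rule a_top[OF g x])
  obtain k1 y1 where k1: "k1 \<in> carrier H" "y1 \<in> topspace TY" "\<phi> (\<psi>' x) m = k1 <#\<^bsub>H\<^esub> Hs m"
    "\<phi> y1 m = Hs m" "\<psi> (\<psi>' x) = a (\<theta> k1) (\<psi> y1)"
    using decomp[OF psi'_top[OF x] Nm] by blast
  obtain k2 y2 where k2: "k2 \<in> carrier H" "y2 \<in> topspace TY" "\<phi> (\<psi>' (a g x)) m = k2 <#\<^bsub>H\<^esub> Hs m"
    "\<phi> y2 m = Hs m" "\<psi> (\<psi>' (a g x)) = a (\<theta> k2) (\<psi> y2)"
    using decomp[OF psi'_top[OF gx] Nm] by blast
  define x1 where "x1 = \<psi> y1"
  define x2 where "x2 = \<psi> y2"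
  have x1t: "x1 \<in> topspace TX" unfolding x1_def by (rule psi_top[OF k1(2)])
  have x2t: "x2 \<in> topspace TX" unfolding x2_def by (rule psi_top[OF k2(2)])
  have xe: "x = a (\<theta> k1) x1" using k1(5) psi_psi'[OF x] unfolding x1_def by simp
  have gxe: "a g x = a (\<theta> k2) x2" using k2(5) psi_psi'[OF gx] unfolding x2_def by simp
  have t1: "\<theta> k1 \<in> carrier G" by (rule theta_carrier[OF k1(1)])
  have t2: "\<theta> k2 \<in> carrier G" by (rule theta_carrier[OF k2(1)])
  have it2: "inv\<^bsub>G\<^esub> \<theta> k2 \<in> carrier G" by (rule group.inv_closed[OF grpG t2])
  have gt1: "g \<otimes>\<^bsub>G\<^esub> \<theta> k1 \<in> carrier G" using g t1 grpG by (simp add: group.is_monoid monoid.m_closed)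
  have e: "inv\<^bsub>G\<^esub> \<theta> k2 \<otimes>\<^bsub>G\<^esub> (g \<otimes>\<^bsub>G\<^esub> \<theta> k1) \<in> carrier G"
    using it2 gt1 grpG by (simp add: group.is_monoid monoid.m_closed)
  have "a (inv\<^bsub>G\<^esub> \<theta> k2 \<otimes>\<^bsub>G\<^esub> (g \<otimes>\<^bsub>G\<^esub> \<theta> k1)) x1 = a (inv\<^bsub>G\<^esub> \<theta> k2) (a (g \<otimes>\<^bsub>G\<^esub> \<theta> k1) x1)"
    by (rule a_mult[OF it2 gt1 x1t])
  also have "a (g \<otimes>\<^bsub>G\<^esub> \<theta> k1) x1 = a g (a (\<theta> k1) x1)" by (rule a_mult[OF g t1 x1t])
  also have "a (\<theta> k1) x1 = x" using xe by simp
  also have "a g x = a (\<theta> k2) x2" by (rule gxe)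
  also have "a (inv\<^bsub>G\<^esub> \<theta> k2) (a (\<theta> k2) x2) = x2" by (rule a_inv_cancel[OF t2 x2t])
  finally have ae: "a (inv\<^bsub>G\<^esub> \<theta> k2 \<otimes>\<^bsub>G\<^esub> (g \<otimes>\<^bsub>G\<^esub> \<theta> k1)) x1 = x2" .
  have l1: "\<phi> (\<psi>' x1) m = Hs m" unfolding x1_def using psi'_psi[OF k1(2)] k1(4) by simp
  have l2: "\<phi> (\<psi>' x2) m = Hs m" unfolding x2_def using psi'_psi[OF k2(2)] k2(4) by simp
  have "inv\<^bsub>G\<^esub> \<theta> k2 \<otimes>\<^bsub>G\<^esub> (g \<otimes>\<^bsub>G\<^esub> \<theta> k1) \<in> \<theta> ` Hs m" by (rule stab[OF Nm x1t x2t l1 l2 e ae])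
  then have ce: "(g \<otimes>\<^bsub>G\<^esub> \<theta> k1) <#\<^bsub>G\<^esub> \<theta> ` Hs m = \<theta> k2 <#\<^bsub>G\<^esub> \<theta> ` Hs m"
    by (rule group.lcos_eq_of_inv[OF grpG theta_sub[OF Nm] gt1 t2])
  have Ts: "\<theta> ` Hs m \<subseteq> carrier G" by (rule subgroup.subset[OF theta_sub[OF Nm]])
  have "\<theta> ` (\<phi> (\<psi>' (a g x)) m) = \<theta> k2 <#\<^bsub>G\<^esub> \<theta> ` Hs m" using k2(3) theta_coset[OF k2(1) Nm] by simp
  also have "\<dots> = (g \<otimes>\<^bsub>G\<^esub> \<theta> k1) <#\<^bsub>G\<^esub> \<theta> ` Hs m" using ce by simp
  also have "\<dots> = g <#\<^bsub>G\<^esub> (\<theta> k1 <#\<^bsub>G\<^esub> \<theta> ` Hs m)" by (rule group.lcos_m_assoc[OF grpG Ts g t1, symmetric])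
  also have "\<theta> k1 <#\<^bsub>G\<^esub> \<theta> ` Hs m = \<theta> ` (\<phi> (\<psi>' x) m)" using k1(3) theta_coset[OF k1(1) Nm] by simp
  finally show ?thesis .
qed

lemma theta_inj_on: "inj_on \<theta> (carrier H)"
  unfolding inj_on_def using theta_inj by blast

lemma theta_img_subset:
  assumes A: "A \<subseteq> carrier H" and B: "B \<subseteq> carrier H" and s: "\<theta> ` A \<subseteq> \<theta> ` B"
  shows "A \<subseteq> B"
proof
  fix x assume x: "x \<in> A"
  then have "\<theta> x \<in> \<theta> ` B" using s by blast
  then show "x \<in> B" using inj_on_image_mem_iff[OF theta_inj_on _ B] x A by blast
qed

lemma lcosH_carrier: "C \<in> lcosets\<^bsub>H\<^esub> (Hs m) \<Longrightarrow> C \<subseteq> carrier H"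
  by (rule subgroup.lcosets_carrier[OF sgH grpH])

definition Gs :: "nat \<Rightarrow> 'g set" where "Gs n = \<theta> ` Hs (n + N)"
definition Hs' :: "nat \<Rightarrow> 'h set" where "Hs' n = Hs (n + N)"
definition F :: "'x \<Rightarrow> nat \<Rightarrow> 'g set" where "F x = (\<lambda>n. \<theta> ` (\<phi> (\<psi>' x) (n + N)))"
definition \<Phi> :: "'y \<Rightarrow> nat \<Rightarrow> 'h set" where "\<Phi> y = (\<lambda>n. \<phi> y (n + N))"

lemma lcosH_finite: "finite (lcosets\<^bsub>H\<^esub> (Hs m))"
  using chainH unfolding fi_chain_def by blast

lemma lcos_img_Gs: "lcosets\<^bsub>G\<^esub> (Gs n) = (\<lambda>C. \<theta> ` C) ` (lcosets\<^bsub>H\<^esub> (Hs (n + N)))"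
  unfolding Gs_def by (rule lcos_img) simp

lemma fiG: "fi_chain G Gs"
  unfolding fi_chain_def
proof (intro allI conjI)
  fix n
  show "subgroup (Gs n) G" unfolding Gs_def by (rule theta_sub) simp
  show "finite (lcosets\<^bsub>G\<^esub> (Gs n))" unfolding lcos_img_Gs using lcosH_finite by simp
  have "Hs (Suc n + N) \<subseteq> Hs (n + N)" using chainH unfolding fi_chain_def by simp
  then show "Gs (Suc n) \<subseteq> Gs n" unfolding Gs_def by blast
qed

lemma fiH': "fi_chain H Hs'"
  unfolding fi_chain_def Hs'_def using chainH unfolding fi_chain_def by simp

lemma F_top: assumes x: "x \<in> topspace TX" shows "F x \<in> topspace (odo_space G Gs)"
proof -
  have y: "\<psi>' x \<in> topspace TY" by (rule psi'_top[OF x])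
  have "F x n \<in> lcosets\<^bsub>G\<^esub> (Gs n)" for n
    unfolding lcos_img_Gs F_def using phi_lev[OF y] by blast
  moreover have "F x (Suc n) \<subseteq> F x n" for n
  proof -
    have "\<phi> (\<psi>' x) (Suc (n + N)) \<subseteq> \<phi> (\<psi>' x) (n + N)" using phi_top[OF y] unfolding odo_topspace by blast
    then show ?thesis unfolding F_def by auto
  qed
  ultimately show ?thesis unfolding odo_topspace by blast
qed

lemma Phi_top: assumes y: "y \<in> topspace TY" shows "\<Phi> y \<in> topspace (odo_space H Hs')"
proof -
  have "\<Phi> y n \<in> lcosets\<^bsub>H\<^esub> (Hs' n)" for n unfolding \<Phi>_def Hs'_def using phi_lev[OF y] by blast
  moreover have "\<Phi> y (Suc n) \<subseteq> \<Phi> y n" for n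
    unfolding \<Phi>_def using phi_top[OF y] unfolding odo_topspace by simp
  ultimately show ?thesis unfolding odo_topspace by blast
qed

lemma psi'_cont: "continuous_map TX TY \<psi>'"
  using psi unfolding homeomorphic_maps_def by blast

lemma F_cont: "continuous_map TX (odo_space G Gs) F"
  unfolding odo_space_def continuous_map_in_subtopology
proof
  show "continuous_map TX (product_topology (\<lambda>n. discrete_topology (lcosets\<^bsub>G\<^esub> (Gs n))) UNIV) F"
    unfolding continuous_map_componentwise_UNIV
  proof
    fix n
    have c1: "continuous_map TX (discrete_topology (lcosets\<^bsub>H\<^esub> (Hs (n + N)))) (\<lambda>x. \<phi> (\<psi>' x) (n + N))"
      using continuous_map_compose[OF psi'_cont proj_cont[of "n + N"]] by (simp add: o_def)
    have c2: "continuous_map (discrete_topology (lcosets\<^bsub>H\<^esub> (Hs (n + N)))) (discrete_topology (lcosets\<^bsub>G\<^esub> (Gs n))) (\<lambda>C. \<theta> ` C)"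
      unfolding continuous_map_from_discrete_topology topspace_discrete_topology lcos_img_Gs by blast
    show "continuous_map TX (discrete_topology (lcosets\<^bsub>G\<^esub> (Gs n))) (\<lambda>x. F x n)"
      using continuous_map_compose[OF c1 c2] unfolding F_def by (simp add: o_def)
  qed
  show "F \<in> topspace TX \<rightarrow> {x. \<forall>n. x (Suc n) \<subseteq> x n}"
    using F_top unfolding odo_topspace by blast
qed

lemma Phi_cont: "continuous_map TY (odo_space H Hs') \<Phi>"
  unfolding odo_space_def continuous_map_in_subtopology
proof
  show "continuous_map TY (product_topology (\<lambda>n. discrete_topology (lcosets\<^bsub>H\<^esub> (Hs' n))) UNIV) \<Phi>"
    unfolding continuous_map_componentwise_UNIV \<Phi>_def Hs'_def using proj_cont by blast
  show "\<Phi> \<in> topspace TY \<rightarrow> {x. \<forall>n. x (Suc n) \<subseteq> x n}"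
    using Phi_top unfolding odo_topspace by blast
qed

lemma Phi_inj: assumes y: "y \<in> topspace TY" and y': "y' \<in> topspace TY" and e: "\<Phi> y = \<Phi> y'"
  shows "y = y'"
proof -
  have "\<phi> y n = \<phi> y' n" for n
  proof -
    have "\<phi> y (n + N) = \<phi> y' (n + N)" using fun_cong[OF e, of n] unfolding \<Phi>_def by simp
    then show ?thesis using phi_eq_below[OF y y'] by simp
  qed
  then have "\<phi> y = \<phi> y'" by blast
  then show ?thesis by (rule phi_inj[OF y y'])
qed

lemma F_inj: assumes x: "x \<in> topspace TX" and x': "x' \<in> topspace TX" and e: "F x = F x'"
  shows "x = x'"
proof -
  have y: "\<psi>' x \<in> topspace TY" by (rule psi'_top[OF x])
  have y': "\<psi>' x' \<in> topspace TY" by (rule psi'_top[OF x'])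
  have "\<Phi> (\<psi>' x) n = \<Phi> (\<psi>' x') n" for n
  proof -
    have "\<theta> ` (\<phi> (\<psi>' x) (n + N)) = \<theta> ` (\<phi> (\<psi>' x') (n + N))" using fun_cong[OF e, of n] unfolding F_def by simp
    then show ?thesis unfolding \<Phi>_def
      using inj_on_image_eq_iff[OF theta_inj_on lcosH_carrier[OF phi_lev[OF y]] lcosH_carrier[OF phi_lev[OF y']]]
      by simp
  qed
  then have "\<psi>' x = \<psi>' x'" using Phi_inj[OF y y'] by blast
  then have "\<psi> (\<psi>' x) = \<psi> (\<psi>' x')" by simp
  then show ?thesis using psi_psi'[OF x] psi_psi'[OF x'] by simp
qed

lemma Phi_surj: "\<Phi> ` topspace TY = topspace (odo_space H Hs')"
proof
  show "\<Phi> ` topspace TY \<subseteq> topspace (odo_space H Hs')" using Phi_top by blast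
  show "topspace (odo_space H Hs') \<subseteq> \<Phi> ` topspace TY"
  proof
    fix w' assume w': "w' \<in> topspace (odo_space H Hs')"
    have w'2: "w' \<in> topspace (odo_space H (\<lambda>n. Hs (n + N)))" using w' unfolding Hs'_def[abs_def] .
    obtain w where w: "w \<in> topspace (odo_space H Hs)" "\<forall>n. w (n + N) = w' n"
      using odo_fill[OF grpH chainH w'2] by blast
    obtain y where y: "y \<in> topspace TY" "\<phi> y = w" using phi_surj[OF w(1)] by blast
    have "\<Phi> y = w'" unfolding \<Phi>_def using y(2) w(2) by simp
    then show "w' \<in> \<Phi> ` topspace TY" using y(1) by blast
  qed
qed

lemma F_surj: "F ` topspace TX = topspace (odo_space G Gs)"
proof
  show "F ` topspace TX \<subseteq> topspace (odo_space G Gs)" using F_top by blast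
  show "topspace (odo_space G Gs) \<subseteq> F ` topspace TX"
  proof
    fix z assume z: "z \<in> topspace (odo_space G Gs)"
    define P where "P n C \<longleftrightarrow> C \<in> lcosets\<^bsub>H\<^esub> (Hs (n + N)) \<and> \<theta> ` C = z n" for n C
    define C where "C n = (SOME C. P n C)" for n
    have PC: "P n (C n)" for n
    proof -
      have "z n \<in> lcosets\<^bsub>G\<^esub> (Gs n)" using z unfolding odo_topspace by blast
      then have "\<exists>C. P n C" unfolding P_def lcos_img_Gs by blast
      then show ?thesis unfolding C_def by (rule someI_ex)
    qed
    have Ct: "C \<in> topspace (odo_space H Hs')"
      unfolding odo_topspace
    proof (intro CollectI conjI allI)
      fix n
      show "C n \<in> lcosets\<^bsub>H\<^esub> (Hs' n)" using PC unfolding P_def Hs'_def by blast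
      have "\<theta> ` C (Suc n) \<subseteq> \<theta> ` C n" using PC[of n] PC[of "Suc n"] z unfolding P_def odo_topspace by simp
      have c1: "C (Suc n) \<subseteq> carrier H" using PC[of "Suc n"] lcosH_carrier unfolding P_def by blast
      have c2: "C n \<subseteq> carrier H" using PC[of n] lcosH_carrier unfolding P_def by blast
      show "C (Suc n) \<subseteq> C n" by (rule theta_img_subset[OF c1 c2]) fact
    qed
    have "C \<in> \<Phi> ` topspace TY" using Phi_surj Ct by simp
    then obtain y where y: "y \<in> topspace TY" "\<Phi> y = C" by blast
    define x where "x = \<psi> y"
    have xt: "x \<in> topspace TX" unfolding x_def by (rule psi_top[OF y(1)])
    have xy: "\<psi>' x = y" unfolding x_def by (rule psi'_psi[OF y(1)])
    have "F x n = z n" for n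
    proof -
      have "F x n = \<theta> ` (\<Phi> y n)" unfolding F_def \<Phi>_def xy by simp
      also have "\<dots> = \<theta> ` (C n)" using y(2) by simp
      also have "\<dots> = z n" using PC[of n] unfolding P_def by blast
      finally show ?thesis .
    qed
    then have "F x = z" by blast
    then show "z \<in> F ` topspace TX" using xt by blast
  qed
qed

lemma F_homeo: "homeomorphic_map TX (odo_space G Gs) F"
  by (rule continuous_imp_homeomorphic_map[OF F_cont compX odo_Hausdorff F_surj])
     (unfold inj_on_def, intro ballI impI, rule F_inj)

lemma Phi_homeo: "homeomorphic_map TY (odo_space H Hs') \<Phi>"
  by (rule continuous_imp_homeomorphic_map[OF Phi_cont compY odo_Hausdorff Phi_surj])
     (unfold inj_on_def, intro ballI impI, rule Phi_inj)

lemma F_equiv: "g \<in> carrier G \<Longrightarrow> x \<in> topspace TX \<Longrightarrow> F (a g x) = odo_act G g (F x)"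
  unfolding F_def odo_act_def using equiv by simp

lemma Phi_equiv: "h \<in> carrier H \<Longrightarrow> y \<in> topspace TY \<Longrightarrow> \<Phi> (b h y) = odo_act H h (\<Phi> y)"
  unfolding \<Phi>_def odo_act_def using phi_b by simp

lemma theta_iso: "\<theta> \<in> iso (H\<lparr>carrier := Hs' 0\<rparr>) (G\<lparr>carrier := Gs 0\<rparr>)"
proof -
  have h1: "\<theta> \<in> Hs N \<rightarrow> \<theta> ` Hs N" by blast
  have h2: "\<forall>x\<in>Hs N. \<forall>y\<in>Hs N. \<theta> (x \<otimes>\<^bsub>H\<^esub> y) = \<theta> x \<otimes>\<^bsub>G\<^esub> \<theta> y"
    using theta_mult Hs_carrier by blast
  have sub: "Hs N \<subseteq> carrier H" by (rule subgroup.subset[OF sgH])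
  have h3: "bij_betw \<theta> (Hs N) (\<theta> ` Hs N)"
    unfolding bij_betw_def using inj_on_subset[OF theta_inj_on sub] by blast
  show ?thesis unfolding Group.iso_def hom_def Hs'_def Gs_def using h1 h2 h3 by simp
qed

lemma card_eq: "finite (lcosets\<^bsub>G\<^esub> (Gs 0)) \<and> card (lcosets\<^bsub>G\<^esub> (Gs 0)) = card (lcosets\<^bsub>H\<^esub> (Hs' 0))"
proof
  show "finite (lcosets\<^bsub>G\<^esub> (Gs 0))" using fiG unfolding fi_chain_def by blast
  have inj: "inj_on (\<lambda>C. \<theta> ` C) (lcosets\<^bsub>H\<^esub> (Hs (0 + N)))"
  proof (rule inj_onI)
    fix C D assume C: "C \<in> lcosets\<^bsub>H\<^esub> (Hs (0 + N))" and D: "D \<in> lcosets\<^bsub>H\<^esub> (Hs (0 + N))"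
      and e: "\<theta> ` C = \<theta> ` D"
    show "C = D" using inj_on_image_eq_iff[OF theta_inj_on lcosH_carrier[OF C] lcosH_carrier[OF D]] e by simp
  qed
  show "card (lcosets\<^bsub>G\<^esub> (Gs 0)) = card (lcosets\<^bsub>H\<^esub> (Hs' 0))"
    unfolding lcos_img_Gs card_image[OF inj] Hs'_def ..
qed

lemma free_odo: "free_action G (odo_space G Gs) (odo_act G)"
  unfolding free_action_def
proof (intro ballI impI)
  fix g z assume g: "g \<in> carrier G" and z: "z \<in> topspace (odo_space G Gs)" and e: "odo_act G g z = z"
  have "z \<in> F ` topspace TX" using F_surj z by simp
  then obtain x where x: "x \<in> topspace TX" "z = F x" by blast
  have "F (a g x) = F x" using F_equiv[OF g x(1)] e x(2) by simp
  then have "a g x = x" by (rule F_inj[OF a_top[OF g x(1)] x(1)])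
  then show "g = \<one>\<^bsub>G\<^esub>" using freeG g x(1) unfolding free_action_def by blast
qed

lemma main_concl:
  "(\<exists>Gs. fi_chain G Gs
            \<and> free_action G (odo_space G Gs) (odo_act G)
            \<and> top_conjugate G TX a (odo_space G Gs) (odo_act G)
            \<and> struct_conjugate G (odo_space G Gs) (odo_act G) H TY b)
       \<and> (\<exists>G0 H0. subgroup G0 G \<and> subgroup H0 H \<and> finite (lcosets\<^bsub>G\<^esub> G0)
            \<and> card (lcosets\<^bsub>G\<^esub> G0) = card (lcosets\<^bsub>H\<^esub> H0)
            \<and> G\<lparr>carrier := G0\<rparr> \<cong> H\<lparr>carrier := H0\<rparr>)"
proof (intro conjI)
  have tc: "top_conjugate G TX a (odo_space G Gs) (odo_act G)"
    unfolding top_conjugate_def using F_homeo F_equiv by blast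
  have d1: "determines G Gs (odo_space G Gs) (odo_act G)"
    unfolding determines_def top_conjugate_def
  proof (intro conjI fiG exI[of _ id])
    show "homeomorphic_map (odo_space G Gs) (odo_space G Gs) id" by simp
    show "\<forall>g\<in>carrier G. \<forall>x\<in>topspace (odo_space G Gs). id (odo_act G g x) = odo_act G g (id x)" by simp
  qed
  have d2: "determines H Hs' TY b"
    unfolding determines_def top_conjugate_def using fiH' Phi_homeo Phi_equiv by blast
  have th: "\<forall>n. \<theta> ` Hs' n = Gs n" unfolding Hs'_def Gs_def by simp
  have sc: "struct_conjugate G (odo_space G Gs) (odo_act G) H TY b"
    unfolding struct_conjugate_def using d1 d2 theta_iso th card_eq by blast
  show "\<exists>Gs. fi_chain G Gs \<and> free_action G (odo_space G Gs) (odo_act G)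
            \<and> top_conjugate G TX a (odo_space G Gs) (odo_act G)
            \<and> struct_conjugate G (odo_space G Gs) (odo_act G) H TY b"
    using fiG free_odo tc sc by blast
  have s1: "subgroup (Gs 0) G" using fiG unfolding fi_chain_def by blast
  have s2: "subgroup (Hs' 0) H" unfolding Hs'_def by (rule sgH)
  have gH: "group (H\<lparr>carrier := Hs' 0\<rparr>)" by (rule subgroup.subgroup_is_group[OF s2 grpH])
  have "H\<lparr>carrier := Hs' 0\<rparr> \<cong> G\<lparr>carrier := Gs 0\<rparr>" unfolding is_iso_def using theta_iso by blast
  then have iso: "G\<lparr>carrier := Gs 0\<rparr> \<cong> H\<lparr>carrier := Hs' 0\<rparr>" by (rule group.iso_sym[OF gH])
  show "\<exists>G0 H0. subgroup G0 G \<and> subgroup H0 H \<and> finite (lcosets\<^bsub>G\<^esub> G0)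
            \<and> card (lcosets\<^bsub>G\<^esub> G0) = card (lcosets\<^bsub>H\<^esub> H0)
            \<and> G\<lparr>carrier := G0\<rparr> \<cong> H\<lparr>carrier := H0\<rparr>"
    using s1 s2 card_eq iso by blast
qed

end

theorem theorem3p3:
  fixes G :: "('g,'b) monoid_scheme" and H :: "('h,'c) monoid_scheme"
    and TX :: "'x topology" and a :: "'g \<Rightarrow> 'x \<Rightarrow> 'x"
    and TY :: "'y topology" and b :: "'h \<Rightarrow> 'y \<Rightarrow> 'y"
  assumes "group G" and "countable (carrier G)"
    and "group H" and "finitely_generated H" and "residually_finite H"
    and "group_action_top H TY b" and "free_action H TY b" and "is_odometer H TY b"
    and "group_action_top G TX a" and "free_action G TX a" and "cantor_space TX"
    and "cont_orbit_equiv G TX a H TY b"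
  shows "(\<exists>Gs. fi_chain G Gs
            \<and> free_action G (odo_space G Gs) (odo_act G)
            \<and> top_conjugate G TX a (odo_space G Gs) (odo_act G)
            \<and> struct_conjugate G (odo_space G Gs) (odo_act G) H TY b)
       \<and> (\<exists>G0 H0. subgroup G0 G \<and> subgroup H0 H \<and> finite (lcosets\<^bsub>G\<^esub> G0)
            \<and> card (lcosets\<^bsub>G\<^esub> G0) = card (lcosets\<^bsub>H\<^esub> H0)
            \<and> G\<lparr>carrier := G0\<rparr> \<cong> H\<lparr>carrier := H0\<rparr>)"
proof -
  obtain Hs \<phi> where Hs: "fi_chain H Hs" "homeomorphic_map TY (odo_space H Hs) \<phi>"
    "\<forall>h\<in>carrier H. \<forall>y\<in>topspace TY. \<phi> (b h y) = odo_act H h (\<phi> y)"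
    using assms(8) unfolding is_odometer_def determines_def top_conjugate_def by blast
  obtain \<psi>1 \<psi>2 where ps: "homeomorphic_maps TX TY \<psi>1 \<psi>2"
    "\<forall>x\<in>topspace TX. \<psi>1 ` orbit_of G a x = orbit_of H b (\<psi>1 x)"
    "\<forall>y\<in>topspace TY. \<forall>h\<in>carrier H. \<exists>g\<in>carrier G. \<exists>V. openin TY V \<and> closedin TY V \<and> y \<in> V
            \<and> (\<forall>w\<in>V. \<psi>2 (b h w) = a g (\<psi>2 w))"
    using assms(12) unfolding cont_orbit_equiv_def by blast
  obtain S where S: "finite S" "S \<subseteq> carrier H" "generate H S = carrier H"
    using assms(4) unfolding finitely_generated_def by blast
  have "compact_space (product_topology (\<lambda>_::nat. discrete_topology {0::nat, 1}) UNIV)"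
    by (simp add: compact_space_product_topology compact_space_discrete_topology)
  then have cX: "compact_space TX"
    using homeomorphic_compact_space assms(11) unfolding cantor_space_def by blast
  interpret coe_setting G H TX a TY b Hs \<phi> \<psi>2 \<psi>1 S
    unfolding coe_setting_def
    by (intro conjI; (fact assms(1) | fact assms(3) | fact assms(6) | fact assms(7) | fact assms(9) | fact assms(10)
       | fact Hs | fact ps | fact S | fact cX | fact homeomorphic_maps_sym[THEN iffD1, OF ps(1)]))
  show ?thesis by (rule main_concl)
qed

end
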